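(* Let $\beta>1$ be an Ito-Sadahiro number, with $d_{-\beta}(l_\beta)=d_1\cdots d_m\,(d_{m+1}\cdots d_{m+p})^\omega$, where $m\ge0$, $p\ge1$ are minimal such that $d_{-\beta}(l_\beta)$ can be written in this form, and let $$P(x)=(-x)^{m+1}\sum_{i=0}^{p-1}(-x)^i+\big((-x)^p-1\big)\sum_{i=1}^m d_i(-x)^{m-i}+\sum_{i=m+1}^{m+p}d_i(-x)^{m+p-i}$$ be its Ito-Sadahiro polynomial. Then every complex root $\gamma\neq\beta$ of $P$ satisfies $|\gamma|<2$. In particular, every algebraic conjugate $\gamma\ne\beta$ of $\beta$ satisfies $|\gamma|<2$.
   Context: For $\beta>1$ put $l_\beta=-\frac{\beta}{\beta+1}$, $r_\beta=\frac{1}{\beta+1}$ and $I_\beta=[l_\beta,r_\beta)$. Define $T:I_\beta\to I_\beta$ by $T(x)=-\beta x-\lfloor -\beta x-l_\beta\rfloor$. The $(-\beta)$-expansion of $x\in I_\beta$ is the infinite word $d_{-\beta}(x)=x_1x_2x_3\cdots$ with $x_i=\lfloor -\beta T^{i-1}(x)-l_\beta\rfloor$ for $i\ge1$; then $x=\sum_{i\ge1}x_i(-\beta)^{-i}$. The notation $w^\omega$ denotes infinite repetition of the finite word $w$. A number $\beta>1$ is an Ito-Sadahiro number if $d_{-\beta}(l_\beta)$ is eventually periodic. *)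

theory Defs
  imports Complex_Main "HOL-Computational_Algebra.Computational_Algebra"
begin

definition nb_l :: "real \<Rightarrow> real" where
  "nb_l \<beta> = - \<beta> / (\<beta> + 1)"

definition nb_r :: "real \<Rightarrow> real" where
  "nb_r \<beta> = 1 / (\<beta> + 1)"

definition nb_T :: "real \<Rightarrow> real \<Rightarrow> real" where
  "nb_T \<beta> x = - \<beta> * x - of_int \<lfloor>- \<beta> * x - nb_l \<beta>\<rfloor>"

text \<open>Digits of the (-beta)-expansion, indexed from 1:
  nb_digit beta x i = x_i = floor(-beta T^(i-1)(x) - l_beta) for i >= 1.\<close>
definition nb_digit :: "real \<Rightarrow> real \<Rightarrow> nat \<Rightarrow> int" where
  "nb_digit \<beta> x i = \<lfloor>- \<beta> * ((nb_T \<beta>) ^^ (i - 1)) x - nb_l \<beta>\<rfloor>"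

definition has_preperiod_period :: "(nat \<Rightarrow> int) \<Rightarrow> nat \<Rightarrow> nat \<Rightarrow> bool" where
  "has_preperiod_period d m p \<longleftrightarrow> p \<ge> 1 \<and> (\<forall>i. i > m \<longrightarrow> d (i + p) = d i)"

definition eventually_periodic :: "(nat \<Rightarrow> int) \<Rightarrow> bool" where
  "eventually_periodic d \<longleftrightarrow> (\<exists>m p. has_preperiod_period d m p)"

definition Ito_Sadahiro_number :: "real \<Rightarrow> bool" where
  "Ito_Sadahiro_number \<beta> \<longleftrightarrow> \<beta> > 1 \<and> eventually_periodic (nb_digit \<beta> (nb_l \<beta>))"

definition IS_poly :: "real \<Rightarrow> nat \<Rightarrow> nat \<Rightarrow> complex \<Rightarrow> complex" where
  "IS_poly \<beta> m p x =
     (let d = (\<lambda>i. of_int (nb_digit \<beta> (nb_l \<beta>) i) :: complex) in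
       (- x) ^ (m + 1) * (\<Sum>i<p. (- x) ^ i)
       + ((- x) ^ p - 1) * (\<Sum>i=1..m. d i * (- x) ^ (m - i))
       + (\<Sum>i=m+1..m+p. d i * (- x) ^ (m + p - i)))"

definition alg_conjugate :: "real \<Rightarrow> complex \<Rightarrow> bool" where
  "alg_conjugate \<beta> \<gamma> \<longleftrightarrow>
     (\<exists>q :: rat poly. irreducible q \<and>
        poly (map_poly of_rat q) (complex_of_real \<beta>) = 0 \<and>
        poly (map_poly of_rat q) \<gamma> = 0)"

end

theory Submission
  imports Defs "HOL-Computational_Algebra.Field_as_Ring"
begin

definition tt :: "real \<Rightarrow> nat \<Rightarrow> real" where
  "tt \<beta> k = (nb_T \<beta> ^^ k) (nb_l \<beta>)"

lemma nbT_range: "nb_l \<beta> \<le> nb_T \<beta> x \<and> nb_T \<beta> x < nb_l \<beta> + 1"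
  unfolding nb_T_def by linarith

lemma tt_range: "nb_l \<beta> \<le> tt \<beta> k \<and> tt \<beta> k < nb_l \<beta> + 1"
proof (cases k)
  case 0 then show ?thesis by (simp add: tt_def)
next
  case (Suc n) then show ?thesis by (simp add: tt_def nbT_range)
qed

lemma tt_Suc: "tt \<beta> (Suc k) = - \<beta> * tt \<beta> k - of_int (nb_digit \<beta> (nb_l \<beta>) (Suc k))"
  by (simp add: tt_def nb_digit_def nb_T_def)

lemma tt_periodic:
  assumes b: "\<beta> > 1" and h: "has_preperiod_period (nb_digit \<beta> (nb_l \<beta>)) m p" and k: "k \<ge> m"
  shows "tt \<beta> (k + p) = tt \<beta> k"
proof (rule ccontr)
  assume ne: "tt \<beta> (k + p) \<noteq> tt \<beta> k"
  define u where "u j = tt \<beta> (k + j + p) - tt \<beta> (k + j)" for j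
  have step: "u (Suc j) = - \<beta> * u j" for j
  proof -
    have "Suc (k + j) > m" using k by simp
    then have "nb_digit \<beta> (nb_l \<beta>) (Suc (k + j) + p) = nb_digit \<beta> (nb_l \<beta>) (Suc (k + j))"
      using h unfolding has_preperiod_period_def by blast
    then show ?thesis unfolding u_def
      using tt_Suc[of \<beta> "k + j + p"] tt_Suc[of \<beta> "k + j"]
      by (simp add: algebra_simps)
  qed
  have uj: "u j = (- \<beta>) ^ j * u 0" for j
    by (induction j) (simp_all add: step)
  have bnd: "\<bar>u j\<bar> < 1" for j
    unfolding u_def using tt_range[of \<beta> "k+j+p"] tt_range[of \<beta> "k+j"] by linarith
  have u0: "\<bar>u 0\<bar> > 0" using ne by (simp add: u_def)
  obtain n where n: "1 / \<bar>u 0\<bar> < \<beta> ^ n" using real_arch_pow[OF b] by blast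
  have ab: "\<bar>- \<beta>\<bar> = \<beta>" using b by simp
  have "\<bar>(- \<beta>) ^ n\<bar> = \<beta> ^ n" unfolding power_abs ab ..
  moreover have "\<bar>u n\<bar> = \<bar>(- \<beta>) ^ n\<bar> * \<bar>u 0\<bar>" unfolding uj[of n] abs_mult ..
  ultimately have "\<bar>u n\<bar> = \<beta> ^ n * \<bar>u 0\<bar>" by simp
  moreover have "1 < \<beta> ^ n * \<bar>u 0\<bar>" using n u0 by (simp add: divide_less_eq)
  ultimately show False using bnd[of n] by linarith
qed

abbreviation dd :: "real \<Rightarrow> nat \<Rightarrow> complex" where
  "dd \<beta> i \<equiv> complex_of_int (nb_digit \<beta> (nb_l \<beta>) i)"

abbreviation tc :: "real \<Rightarrow> nat \<Rightarrow> complex" where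
  "tc \<beta> k \<equiv> complex_of_real (tt \<beta> k)"

primrec AA :: "real \<Rightarrow> complex \<Rightarrow> nat \<Rightarrow> complex" where
  "AA b y 0 = 0"
| "AA b y (Suc n) = y * AA b y n + dd b (Suc n)"

primrec SS :: "real \<Rightarrow> complex \<Rightarrow> nat \<Rightarrow> complex" where
  "SS b y 0 = 0"
| "SS b y (Suc n) = y * SS b y n + tc b n"

lemma dd_Suc: "dd b (Suc n) = - of_real b * tc b n - tc b (Suc n)"
proof -
  have "real_of_int (nb_digit b (nb_l b) (Suc n)) = - b * tt b n - tt b (Suc n)"
    using tt_Suc[of b n] by simp
  then have "complex_of_real (real_of_int (nb_digit b (nb_l b) (Suc n))) = complex_of_real (- b * tt b n - tt b (Suc n))"
    by simp
  then show ?thesis by simp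
qed

lemma AA_closed: "AA b y n = tc b 0 * y ^ n - tc b n - (y + of_real b) * SS b y n"
proof (induction n)
  case 0 then show ?case by simp
next
  case (Suc n)
  show ?case by (simp add: Suc dd_Suc algebra_simps)
qed

lemma AA_sum: "AA b y n = (\<Sum>i=1..n. dd b i * y ^ (n - i))"
proof (induction n)
  case 0 then show ?case by simp
next
  case (Suc n)
  have "(\<Sum>i=1..Suc n. dd b i * y ^ (Suc n - i)) = (\<Sum>i=1..n. dd b i * y ^ (Suc n - i)) + dd b (Suc n)"
    by simp
  also have "(\<Sum>i=1..n. dd b i * y ^ (Suc n - i)) = y * (\<Sum>i=1..n. dd b i * y ^ (n - i))"
    unfolding sum_distrib_left
    by (rule sum.cong) (auto simp: Suc_diff_le)
  finally show ?case by (simp add: Suc)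
qed

lemma AA_split: "(\<Sum>i=m+1..m+p. dd b i * y ^ (m + p - i)) = AA b y (m + p) - y ^ p * AA b y m"
proof -
  have "AA b y (m + p) = (\<Sum>i=1..m+p. dd b i * y ^ (m + p - i))" by (rule AA_sum)
  also have "\<dots> = (\<Sum>i=1..m. dd b i * y ^ (m + p - i)) + (\<Sum>i=m+1..m+p. dd b i * y ^ (m + p - i))"
    by (rule sum.ub_add_nat) simp
  also have "(\<Sum>i=1..m. dd b i * y ^ (m + p - i)) = y ^ p * AA b y m"
    unfolding AA_sum sum_distrib_left
    by (rule sum.cong) (auto simp: power_add[symmetric] algebra_simps)
  finally show ?thesis by simp
qed

lemma IS_poly_AA: "IS_poly b m p x = (- x) ^ (m + 1) * (\<Sum>i<p. (- x) ^ i) + AA b (- x) (m + p) - AA b (- x) m"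
  unfolding IS_poly_def Let_def AA_split AA_sum[symmetric] by (simp add: algebra_simps)

lemma key_lr:
  assumes "\<beta> > 1"
  shows "y + complex_of_real (nb_l \<beta>) * (y - 1) = complex_of_real (nb_r \<beta>) * (y + complex_of_real \<beta>)"
proof -
  have ne: "complex_of_real \<beta> + 1 \<noteq> 0"
    using assms by (metis of_real_1 of_real_add of_real_eq_0_iff add_pos_pos less_numeral_extra(1) order.strict_trans not_less_iff_gr_or_eq)
  show ?thesis unfolding nb_l_def nb_r_def using ne
    by (simp add: field_simps)
qed

lemma IS_factor:
  assumes b: "\<beta> > 1" and h: "has_preperiod_period (nb_digit \<beta> (nb_l \<beta>)) m p"
  shows "IS_poly \<beta> m p x = (- x + of_real \<beta>) *
     (of_real (nb_r \<beta>) * (- x) ^ m * (\<Sum>i<p. (- x) ^ i) - (SS \<beta> (- x) (m + p) - SS \<beta> (- x) m))"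
proof -
  define y where "y = - x"
  define G where "G = (\<Sum>i<p. y ^ i)"
  have per: "tc \<beta> (m + p) = tc \<beta> m" using tt_periodic[OF b h, of m] by simp
  have t0: "tc \<beta> 0 = of_real (nb_l \<beta>)" by (simp add: tt_def)
  have pw1: "y ^ p - 1 = (y - 1) * G"
    unfolding G_def by (rule power_diff_1_eq)
  have pw2: "y ^ (m + p) - y ^ m = y ^ m * (y ^ p - 1)" by (simp add: power_add algebra_simps)
  have pw: "y ^ (m + p) - y ^ m = y ^ m * (y - 1) * G"
    unfolding pw2 pw1 by (simp add: algebra_simps)
  have "IS_poly \<beta> m p x = y ^ (m + 1) * G + AA \<beta> y (m + p) - AA \<beta> y m"
    unfolding IS_poly_AA y_def G_def ..
  also have "\<dots> = y ^ (m + 1) * G + tc \<beta> 0 * (y ^ (m + p) - y ^ m)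
      - (y + of_real \<beta>) * (SS \<beta> y (m + p) - SS \<beta> y m)"
    unfolding AA_closed per by (simp add: algebra_simps)
  also have "\<dots> = y ^ m * G * (y + of_real (nb_l \<beta>) * (y - 1))
      - (y + of_real \<beta>) * (SS \<beta> y (m + p) - SS \<beta> y m)"
    unfolding pw t0 by (simp add: algebra_simps)
  also have "\<dots> = (y + of_real \<beta>) * (of_real (nb_r \<beta>) * y ^ m * G - (SS \<beta> y (m + p) - SS \<beta> y m))"
    unfolding key_lr[OF b] by (simp add: algebra_simps)
  finally show ?thesis unfolding y_def G_def .
qed

primrec FF :: "real \<Rightarrow> complex \<Rightarrow> nat \<Rightarrow> complex" where
  "FF b z 0 = 1"
| "FF b z (Suc n) = FF b z n - of_real (tt b (Suc n) - tt b n) * z ^ Suc n"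

lemma FF_SS:
  assumes yz: "y * z = 1" and b: "\<beta> > 1"
  shows "y ^ n * FF \<beta> z n = of_real (nb_r \<beta>) * y ^ n - (y - 1) * SS \<beta> y n - tc \<beta> n"
proof (induction n)
  case 0
  have "nb_r \<beta> - nb_l \<beta> = 1" using b unfolding nb_r_def nb_l_def by (simp add: field_simps)
  then have "complex_of_real (nb_r \<beta>) - complex_of_real (nb_l \<beta>) = 1"
    by (metis of_real_1 of_real_diff)
  then show ?case by (simp add: tt_def)
next
  case (Suc n)
  have "y ^ Suc n * z ^ Suc n = 1" by (metis power_mult_distrib yz power_one)
  have "y ^ Suc n * FF \<beta> z (Suc n) = y * (y ^ n * FF \<beta> z n) - (tc \<beta> (Suc n) - tc \<beta> n) * (y ^ Suc n * z ^ Suc n)"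
    by (simp add: algebra_simps del: power_Suc) (simp add: power_Suc)
  then have "y ^ Suc n * FF \<beta> z (Suc n) = y * (y ^ n * FF \<beta> z n) - (tc \<beta> (Suc n) - tc \<beta> n)"
    using \<open>y ^ Suc n * z ^ Suc n = 1\<close> by simp
  then show ?case unfolding Suc by (simp add: algebra_simps)
qed

lemma e_bound: "\<bar>tt \<beta> (Suc n) - tt \<beta> n\<bar> < 1"
  using tt_range[of \<beta> "Suc n"] tt_range[of \<beta> n] by linarith

lemma FF_bound:
  assumes z: "cmod z \<le> 1/2" and n: "n \<ge> 1"
  shows "cmod (1 - FF \<beta> z n) \<le> 1 - (1/2) ^ n - (1 - \<bar>tt \<beta> 1 - tt \<beta> 0\<bar>) / 2"
  using n
proof (induction n)
  case 0 then show ?case by simp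
next
  case (Suc n)
  have ez: "cmod (of_real (tt \<beta> (Suc n) - tt \<beta> n) * z ^ Suc n) \<le> \<bar>tt \<beta> (Suc n) - tt \<beta> n\<bar> * (1/2) ^ Suc n"
    unfolding norm_mult norm_of_real norm_power
    by (intro mult_left_mono power_mono) (use z in auto)
  show ?case
  proof (cases "n = 0")
    case True
    have "\<bar>tt \<beta> (Suc n) - tt \<beta> n\<bar> * (1/2) ^ Suc n = \<bar>tt \<beta> 1 - tt \<beta> 0\<bar> / 2" using True by simp
    then show ?thesis using ez True by (simp del: of_real_diff add: field_simps)
  next
    case False
    then have IH: "cmod (1 - FF \<beta> z n) \<le> 1 - (1/2) ^ n - (1 - \<bar>tt \<beta> 1 - tt \<beta> 0\<bar>) / 2"
      using Suc by simp
    have "\<bar>tt \<beta> (Suc n) - tt \<beta> n\<bar> * (1/2) ^ Suc n \<le> (1/2::real) ^ Suc n"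
      using e_bound[of \<beta> n] by (intro mult_left_le_one_le) auto
    then have ez2: "cmod (of_real (tt \<beta> (Suc n) - tt \<beta> n) * z ^ Suc n) \<le> (1/2) ^ Suc n"
      using ez by linarith
    have "cmod (1 - FF \<beta> z (Suc n)) \<le> cmod (1 - FF \<beta> z n) + cmod (of_real (tt \<beta> (Suc n) - tt \<beta> n) * z ^ Suc n)"
    proof -
      have "1 - FF \<beta> z (Suc n) = (1 - FF \<beta> z n) + of_real (tt \<beta> (Suc n) - tt \<beta> n) * z ^ Suc n"
        by (simp del: of_real_diff power_Suc)
      then show ?thesis by (metis norm_triangle_ineq)
    qed
    then show ?thesis using IH ez2 by simp
  qed
qed

lemma FF_inv:
  assumes b: "\<beta> > 1" and h: "has_preperiod_period (nb_digit \<beta> (nb_l \<beta>)) m p" and n: "n \<ge> m"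
  shows "FF \<beta> z (n + p) - z ^ p * FF \<beta> z n = FF \<beta> z (m + p) - z ^ p * FF \<beta> z m"
  using n
proof (induction n rule: dec_induct)
  case base then show ?case by simp
next
  case (step n)
  have e: "tt \<beta> (Suc n + p) - tt \<beta> (n + p) = tt \<beta> (Suc n) - tt \<beta> n"
    using tt_periodic[OF b h, of n] tt_periodic[OF b h, of "Suc n"] step by simp
  have f1: "FF \<beta> z (Suc n + p) = FF \<beta> z (n + p) - of_real (tt \<beta> (Suc n) - tt \<beta> n) * z ^ (Suc n + p)"
    using e by (simp del: of_real_diff)
  have f2: "FF \<beta> z (Suc n) = FF \<beta> z n - of_real (tt \<beta> (Suc n) - tt \<beta> n) * z ^ (Suc n)"
    by (simp del: of_real_diff)
  have "FF \<beta> z (Suc n + p) - z ^ p * FF \<beta> z (Suc n) = FF \<beta> z (n + p) - z ^ p * FF \<beta> z n"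
    unfolding f1 f2 by (simp add: algebra_simps power_add del: of_real_diff)
  then show ?case using step by simp
qed

lemma root_bound:
  assumes b: "\<beta> > 1" and h: "has_preperiod_period (nb_digit \<beta> (nb_l \<beta>)) m p"
    and root: "IS_poly \<beta> m p \<gamma> = 0" and ne: "\<gamma> \<noteq> complex_of_real \<beta>"
  shows "cmod \<gamma> < 2"
proof (rule ccontr)
  assume "\<not> cmod \<gamma> < 2"
  then have g2: "cmod \<gamma> \<ge> 2" by simp
  have p1: "p \<ge> 1" using h unfolding has_preperiod_period_def by simp
  define y where "y = - \<gamma>"
  define z where "z = 1 / y"
  have y0: "y \<noteq> 0" using g2 unfolding y_def by auto
  have yz: "y * z = 1" using y0 unfolding z_def by simp
  have zb: "cmod z \<le> 1/2" using g2 unfolding z_def y_def by (simp add: norm_divide divide_simps)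
  define G where "G = (\<Sum>i<p. y ^ i)"
  have yb: "y + of_real \<beta> \<noteq> 0" using ne unfolding y_def by (simp add: algebra_simps)
  have W: "of_real (nb_r \<beta>) * y ^ m * G - (SS \<beta> y (m + p) - SS \<beta> y m) = 0"
    using root IS_factor[OF b h, of \<gamma>] yb unfolding y_def G_def by simp
  have per: "tc \<beta> (m + p) = tc \<beta> m" using tt_periodic[OF b h, of m] by simp
  have pw1: "y ^ p - 1 = (y - 1) * G"
    unfolding G_def by (rule power_diff_1_eq)
  have "y ^ (m + p) * FF \<beta> z (m + p) - y ^ m * FF \<beta> z m
     = (y - 1) * (of_real (nb_r \<beta>) * y ^ m * G - (SS \<beta> y (m + p) - SS \<beta> y m))"
  proof -
    have "y ^ (m + p) * FF \<beta> z (m + p) - y ^ m * FF \<beta> z m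
       = of_real (nb_r \<beta>) * y ^ m * (y ^ p - 1) - (y - 1) * (SS \<beta> y (m + p) - SS \<beta> y m)"
      unfolding FF_SS[OF yz b] per by (simp add: algebra_simps power_add)
    then show ?thesis unfolding pw1 by (simp add: algebra_simps)
  qed
  then have eq1: "y ^ (m + p) * FF \<beta> z (m + p) = y ^ m * FF \<beta> z m" using W by simp
  have zy: "z ^ (m + p) * y ^ (m + p) = 1" "z ^ (m + p) * y ^ m = z ^ p"
    using yz by (simp_all add: power_add power_mult_distrib[symmetric] algebra_simps)
  have "FF \<beta> z (m + p) = z ^ p * FF \<beta> z m"
  proof -
    have "z ^ (m + p) * (y ^ (m + p) * FF \<beta> z (m + p)) = z ^ (m + p) * (y ^ m * FF \<beta> z m)"
      using eq1 by simp
    then show ?thesis unfolding mult.assoc[symmetric] zy by simp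
  qed
  then have rec: "FF \<beta> z (n + p) = z ^ p * FF \<beta> z n" if "n \<ge> m" for n
    using FF_inv[OF b h that, of z] by simp
  have iter: "FF \<beta> z (m + j * p) = z ^ (j * p) * FF \<beta> z m" for j
  proof (induction j)
    case 0 then show ?case by simp
  next
    case (Suc j)
    have "FF \<beta> z (m + Suc j * p) = FF \<beta> z ((m + j * p) + p)" by (simp add: algebra_simps)
    also have "\<dots> = z ^ p * FF \<beta> z (m + j * p)" by (rule rec) simp
    finally show ?case using Suc by (simp add: algebra_simps power_add)
  qed
  define \<delta> where "\<delta> = (1 - \<bar>tt \<beta> 1 - tt \<beta> 0\<bar>) / 2"
  have d0: "\<delta> > 0" using e_bound[of \<beta> 0] unfolding \<delta>_def by simp
  have lower: "cmod (FF \<beta> z n) \<ge> \<delta>" if "n \<ge> 1" for n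
  proof -
    have "cmod (1 - FF \<beta> z n) \<le> 1 - (1/2) ^ n - \<delta>" using FF_bound[OF zb that] unfolding \<delta>_def .
    moreover have "(1/2::real) ^ n \<ge> 0" by simp
    moreover have "1 \<le> cmod (1 - FF \<beta> z n) + cmod (FF \<beta> z n)"
      by (metis norm_one norm_triangle_ineq diff_add_cancel)
    ultimately show ?thesis by linarith
  qed
  have upper: "cmod (FF \<beta> z m) \<le> 2"
  proof (cases "m = 0")
    case True then show ?thesis by simp
  next
    case False
    then have "cmod (1 - FF \<beta> z m) \<le> 1 - (1/2) ^ m - \<delta>" using FF_bound[OF zb] unfolding \<delta>_def by simp
    moreover have "(1/2::real) ^ m \<ge> 0" by simp
    moreover have "cmod (FF \<beta> z m) \<le> 1 + cmod (1 - FF \<beta> z m)"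
      using norm_triangle_ineq4[of "1::complex" "1 - FF \<beta> z m"] by simp
    ultimately show ?thesis using d0 by linarith
  qed
  obtain j where j: "(1/2::real) ^ j < \<delta> / 2" using real_arch_pow_inv[of "\<delta>/2" "1/2"] d0 by auto
  have "\<delta> \<le> 1/2" unfolding \<delta>_def by simp
  then have j1: "j \<ge> 1" using j by (cases j) auto
  have "1 * 1 \<le> j * p" using j1 p1 by (rule mult_le_mono)
  then have "1 \<le> m + j * p" by linarith
  then have "\<delta> \<le> cmod (FF \<beta> z (m + j * p))" by (rule lower)
  also have "\<dots> = cmod z ^ (j * p) * cmod (FF \<beta> z m)" unfolding iter by (simp add: norm_mult norm_power)
  also have "\<dots> \<le> (1/2) ^ (j * p) * 2"
    by (intro mult_mono power_mono zb upper) auto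
  also have "(1/2::real) ^ (j * p) \<le> (1/2) ^ j"
    using p1 j1 by (intro power_decreasing) auto
  then have "(1/2::real) ^ (j * p) * 2 \<le> (1/2) ^ j * 2" by simp
  finally show False using j by linarith
qed

abbreviation phi :: "rat poly \<Rightarrow> complex poly" where
  "phi q \<equiv> map_poly of_rat q"

lemma phi_add: "phi (a + b) = phi a + phi b"
  by (rule poly_eqI) (simp add: coeff_map_poly of_rat_add)

lemma phi_diff: "phi (a - b) = phi a - phi b"
  by (rule poly_eqI) (simp add: coeff_map_poly of_rat_diff)

lemma phi_smult: "phi (smult c b) = smult (of_rat c) (phi b)"
  by (rule map_poly_smult) (simp_all add: of_rat_mult)
lemma phi_pCons: "phi (pCons c b) = pCons (of_rat c) (phi b)"
  by (rule map_poly_pCons) simp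
lemma phi_mult: "phi (a * b) = phi a * phi b"
proof (induction a)
  case 0 then show ?case by simp
next
  case (pCons c a)
  show ?case unfolding mult_pCons_left phi_add phi_smult phi_pCons pCons(2) by simp
qed

lemma phi_1: "phi 1 = 1" by simp

lemma phi_power: "phi (a ^ n) = phi a ^ n"
  by (induction n) (simp_all add: phi_mult)

lemma phi_sum: "phi (\<Sum>i\<in>A. f i) = (\<Sum>i\<in>A. phi (f i))"
  by (induction A rule: infinite_finite_induct) (simp_all add: phi_add)

lemma phi_const: "phi [:c:] = [:of_rat c:]"
  by (simp add: map_poly_pCons)

lemma phi_v: "phi [:0, -1:] = [:0, -1:]"
  by (simp add: map_poly_pCons)

definition PQ :: "real \<Rightarrow> nat \<Rightarrow> nat \<Rightarrow> rat poly" where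
  "PQ b m p = [:0, -1:] ^ (m + 1) * (\<Sum>i<p. [:0, -1:] ^ i)
     + ([:0, -1:] ^ p - 1) * (\<Sum>i=1..m. [:of_int (nb_digit b (nb_l b) i):] * [:0, -1:] ^ (m - i))
     + (\<Sum>i=m+1..m+p. [:of_int (nb_digit b (nb_l b) i):] * [:0, -1:] ^ (m + p - i))"

lemma PQ_eval: "poly (phi (PQ b m p)) x = IS_poly b m p x"
  unfolding PQ_def IS_poly_def Let_def phi_add phi_mult phi_diff phi_power phi_sum phi_const phi_v phi_1
  by (simp add: poly_sum)

lemma phi_eval_mult: "poly (phi (a * b)) x = poly (phi a) x * poly (phi b) x"
  by (simp add: phi_mult)

lemma irr_prime: "irreducible (q::rat poly) \<Longrightarrow> prime_elem q"
  by (rule irreducible_imp_prime_elem_gcd)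

lemma conj_root:
  assumes b: "\<beta> > 1" and h: "has_preperiod_period (nb_digit \<beta> (nb_l \<beta>)) m p"
    and q: "irreducible q" "poly (phi q) (complex_of_real \<beta>) = 0" "poly (phi q) \<gamma> = 0"
  shows "IS_poly \<beta> m p \<gamma> = 0"
proof -
  have Pb: "poly (phi (PQ \<beta> m p)) (complex_of_real \<beta>) = 0"
  proof -
    have z: "- complex_of_real \<beta> + complex_of_real \<beta> = 0" by simp
    have "IS_poly \<beta> m p (complex_of_real \<beta>) = (- complex_of_real \<beta> + complex_of_real \<beta>) *
     (of_real (nb_r \<beta>) * (- complex_of_real \<beta>) ^ m * (\<Sum>i<p. (- complex_of_real \<beta>) ^ i) - (SS \<beta> (- complex_of_real \<beta>) (m + p) - SS \<beta> (- complex_of_real \<beta>) m))"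
      by (rule IS_factor[OF b h])
    then have "IS_poly \<beta> m p (complex_of_real \<beta>) = 0" by (simp only: z mult_zero_left)
    then show ?thesis by (simp only: PQ_eval)
  qed
  have "q dvd PQ \<beta> m p"
  proof (rule ccontr)
    let ?P = "PQ \<beta> m p"
    assume nd: "\<not> q dvd ?P"
    have "prime_elem q" by (rule irr_prime[OF q(1)])
    then have "coprime q ?P" using nd by (rule prime_elem_imp_coprime)
    then have g: "gcd q ?P = 1" by (simp only: coprime_iff_gcd_eq_1)
    define a where "a = fst (bezout_coefficients q ?P)"
    define c where "c = snd (bezout_coefficients q ?P)"
    have "a * q + c * ?P = 1"
      using bezout_coefficients_fst_snd[of q ?P] unfolding g a_def c_def .
    then have "poly (phi (a * q + c * ?P)) (complex_of_real \<beta>) = 1"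
      by simp
    then have "poly (phi a) (complex_of_real \<beta>) * poly (phi q) (complex_of_real \<beta>) + poly (phi c) (complex_of_real \<beta>) * poly (phi ?P) (complex_of_real \<beta>) = 1"
      unfolding phi_add phi_mult poly_add poly_mult .
    then show False using Pb q(2) by simp
  qed
  then obtain s where "PQ \<beta> m p = q * s" by (auto elim: dvdE)
  then have "poly (phi (PQ \<beta> m p)) \<gamma> = 0" using q(3) by (simp add: phi_mult)
  then show ?thesis unfolding PQ_eval .
qed

theorem theorem1:
  fixes \<beta> :: real and m p :: nat
  assumes "\<beta> > 1"
    and "Ito_Sadahiro_number \<beta>"
    and "has_preperiod_period (nb_digit \<beta> (nb_l \<beta>)) m p"
    and "\<And>m' p'. has_preperiod_period (nb_digit \<beta> (nb_l \<beta>)) m' p' \<Longrightarrow> m \<le> m' \<and> p \<le> p'"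
  shows "(\<forall>\<gamma>. IS_poly \<beta> m p \<gamma> = 0 \<and> \<gamma> \<noteq> complex_of_real \<beta> \<longrightarrow> cmod \<gamma> < 2)
       \<and> (\<forall>\<gamma>. alg_conjugate \<beta> \<gamma> \<and> \<gamma> \<noteq> complex_of_real \<beta> \<longrightarrow> cmod \<gamma> < 2)"
proof (intro conjI allI impI)
  fix \<gamma> assume "IS_poly \<beta> m p \<gamma> = 0 \<and> \<gamma> \<noteq> complex_of_real \<beta>"
  then show "cmod \<gamma> < 2" using root_bound[OF assms(1,3)] by blast
next
  fix \<gamma> assume a: "alg_conjugate \<beta> \<gamma> \<and> \<gamma> \<noteq> complex_of_real \<beta>"
  then obtain q where q: "irreducible q" "poly (phi q) (complex_of_real \<beta>) = 0" "poly (phi q) \<gamma> = 0"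
    unfolding alg_conjugate_def by blast
  have "IS_poly \<beta> m p \<gamma> = 0" by (rule conj_root[OF assms(1,3) q])
  then show "cmod \<gamma> < 2" using root_bound[OF assms(1,3)] a by blast
qed

end
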